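(* Let $k$ be a positive integer, $a=6k+1$, $b=a+2$, $c=a+4$, $S=\{a,b,c\}$, $G=\langle S\rangle$, $t=\lfloor 3k/2\rfloor$, and $\epsilon=0$ if $k$ is even, $\epsilon=1$ if $k$ is odd. Define $A_{i,k}=[ia,\,ia+4i]_2$ for $i\in[1,t]$, and for $i\in[t+1,2t+\epsilon]$ $B_{i,k}=[ia,\,ia+2(2(i-t-1)-\epsilon)]$, $C_{i,k}=[ia+2(2(i-t-1)-\epsilon+1),\,ia+2(2t+\epsilon)]_2$. Let $H_{4,k}=\{0\}\cup\bigcup_{i=1}^{t}A_{i,k}\cup\bigcup_{i=t+1}^{2t+\epsilon}(B_{i,k}\cup C_{i,k})\cup[(2t+\epsilon+1)a,\infty[$. Then: (1) $H_{4,k}$ is a submonoid of $(\mathbb{N},+,0)$ containing $S$; (2) $A_{i,k}<A_{i+1,k}$ for $i\in[1,t-1]$; if $k$ is even then $A_{t,k}<B_{t+1,k}$ and $B_{t+1,k}<C_{t+1,k}$, while if $k$ is odd then $B_{t+1,k}=\emptyset$ and $A_{t,k}<C_{t+1,k}$; $B_{i,k}<C_{i,k}$ for $i\in[t+2,2t+\epsilon]$; $C_{i,k}<B_{i+1,k}$ for $i\in[t+1,2t+\epsilon-1]$; and $C_{2t+\epsilon,k}<[(2t+\epsilon+1)a,\infty[$; (3) $G=H_{4,k}$; (4) $H_{4,k}$ is a $3$-permutation numerical semigroup.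
   Context: $\mathbb{N}=\{0,1,2,\dots\}$. A numerical semigroup is a submonoid $G$ of $(\mathbb{N},+,0)$ with $\mathbb{N}\setminus G$ finite; $\langle S\rangle$ is the submonoid generated by $S$. Writing the elements of a numerical semigroup as $0=g_0<g_1<g_2<\cdots$, it is an $n$-permutation numerical semigroup if it is generated by $\{g_1,\dots,g_n\}$ and for every $k\in\mathbb{N}$ the tuple $(g_{kn+1}\bmod n,\dots,g_{kn+n}\bmod n)$ contains exactly one representative of each residue class mod $n$. Notation: $[u,v]=\{x\in\mathbb{N}:u\le x\le v\}$ and $[u,v]_2=\{x\in[u,v]:x\equiv u\pmod 2\}$ (both empty if $u>v$); $[u,\infty[=\{x\in\mathbb{N}:x\ge u\}$. For nonempty $X,Y\subseteq\mathbb{N}$, $X<Y$ means $x<y$ for all $x\in X,y\in Y$. *)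

theory Defs
  imports Main "HOL-Library.Infinite_Set"
begin

definition submonoid :: "nat set \<Rightarrow> bool" where
  "submonoid M \<longleftrightarrow> 0 \<in> M \<and> (\<forall>x\<in>M. \<forall>y\<in>M. x + y \<in> M)"

inductive_set gen :: "nat set \<Rightarrow> nat set" for S :: "nat set" where
  gen_zero: "0 \<in> gen S"
| gen_base: "x \<in> S \<Longrightarrow> x \<in> gen S"
| gen_add: "x \<in> gen S \<Longrightarrow> y \<in> gen S \<Longrightarrow> x + y \<in> gen S"

definition numerical_semigroup :: "nat set \<Rightarrow> bool" where
  "numerical_semigroup G \<longleftrightarrow> submonoid G \<and> finite (UNIV - G)"

text \<open>g_j = enumerate G j is the j-th element of G (g_0 = 0).\<close>
definition perm_numerical_semigroup :: "nat \<Rightarrow> nat set \<Rightarrow> bool" where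
  "perm_numerical_semigroup n G \<longleftrightarrow> numerical_semigroup G
     \<and> G = gen (enumerate G ` {1..n})
     \<and> (\<forall>k. bij_betw (\<lambda>j. enumerate G (k * n + j) mod n) {1..n} {0..<n})"

text \<open>[u,v] and [u,v]_2 with integer bounds (empty when u > v).\<close>
definition ival :: "int \<Rightarrow> int \<Rightarrow> nat set" where
  "ival u v = {x. u \<le> int x \<and> int x \<le> v}"

definition ival2 :: "int \<Rightarrow> int \<Rightarrow> nat set" where
  "ival2 u v = {x \<in> ival u v. even (int x - u)}"

definition set_less :: "nat set \<Rightarrow> nat set \<Rightarrow> bool" (infix "<\<^sub>s" 50) where
  "X <\<^sub>s Y \<longleftrightarrow> X \<noteq> {} \<and> Y \<noteq> {} \<and> (\<forall>x\<in>X. \<forall>y\<in>Y. x < y)"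

definition aa :: "nat \<Rightarrow> nat" where "aa k = 6 * k + 1"
definition tt :: "nat \<Rightarrow> nat" where "tt k = (3 * k) div 2"
definition eps :: "nat \<Rightarrow> nat" where "eps k = (if even k then 0 else 1)"

definition Aset :: "nat \<Rightarrow> nat \<Rightarrow> nat set" where
  "Aset k i =
     ival2 (int i * int (aa k)) (int i * int (aa k) + 4 * int i)"

definition Bset :: "nat \<Rightarrow> nat \<Rightarrow> nat set" where
  "Bset k i = ival (int i * int (aa k))
     (int i * int (aa k) + 2 * (2 * (int i - int (tt k) - 1) - int (eps k)))"

definition Cset :: "nat \<Rightarrow> nat \<Rightarrow> nat set" where
  "Cset k i = ival2 (int i * int (aa k) + 2 * (2 * (int i - int (tt k) - 1) - int (eps k) + 1))
     (int i * int (aa k) + 2 * (2 * int (tt k) + int (eps k)))"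

definition Hset :: "nat \<Rightarrow> nat set" where
  "Hset k = {0} \<union> (\<Union>i\<in>{1..tt k}. Aset k i)
     \<union> (\<Union>i\<in>{tt k + 1..2 * tt k + eps k}. Bset k i \<union> Cset k i)
     \<union> {(2 * tt k + eps k + 1) * aa k..}"

end

theory Submission
  imports Defs
begin


lemma eps_le: "eps k \<le> 1" by (simp add: eps_def)
lemma tt_eps: "2 * tt k + eps k = 3 * k"
  unfolding tt_def eps_def by presburger
lemma tt_mod3: "tt k mod 3 = eps k"
  unfolding tt_def eps_def by presburger
lemma aa_pos: "0 < aa k" by (simp add: aa_def)
lemma odd_aa: "odd (aa k)" by (simp add: aa_def)

lemma gen_sub: "x \<in> gen {aa k, aa k + 2, aa k + 4} \<Longrightarrow> \<exists>i j. j \<le> 2*i \<and> x = i * aa k + 2*j"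
proof (induction rule: gen.induct)
  case gen_zero then show ?case by auto
next
  case (gen_base x)
  have "x = 1*aa k + 2*0 \<or> x = 1*aa k + 2*1 \<or> x = 1*aa k+2*2" using gen_base by auto
  moreover have "(0::nat) \<le> 2*1" "(1::nat) \<le> 2*1" "(2::nat) \<le> 2*1" by auto
  ultimately show ?case by blast
next
  case (gen_add x y)
  then obtain i j i' j' where "j \<le> 2*i" "x = i * aa k + 2*j" "j' \<le> 2*i'" "y = i' * aa k + 2*j'" by blast
  then show ?case by (intro exI[of _ "i+i'"] exI[of _ "j+j'"]) (auto simp: algebra_simps)
qed

lemma gen_sup: "j \<le> 2*i \<Longrightarrow> i * aa k + 2*j \<in> gen {aa k, aa k + 2, aa k + 4}"
proof (induction i arbitrary: j)
  case 0 then show ?case by (simp add: gen_zero)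
next
  case (Suc i)
  define d where "d = j - min j (2*i)"
  have d: "d \<le> 2" "j = min j (2*i) + d" using Suc.prems by (auto simp: d_def)
  have "i * aa k + 2 * min j (2*i) \<in> gen {aa k, aa k + 2, aa k + 4}" using Suc.IH by simp
  moreover have "aa k + 2*d \<in> gen {aa k, aa k + 2, aa k + 4}"
    using d(1) by (intro gen_base) (auto simp: le_Suc_eq numeral_2_eq_2)
  ultimately have "(i * aa k + 2 * min j (2*i)) + (aa k + 2*d) \<in> gen {aa k, aa k + 2, aa k + 4}"
    by (rule gen_add)
  also have "(i * aa k + 2 * min j (2*i)) + (aa k + 2*d) = Suc i * aa k + 2 * j"
    using d(2) by (simp add: algebra_simps)
  finally show ?case .
qed

definition condM :: "nat \<Rightarrow> nat \<Rightarrow> nat \<Rightarrow> bool" where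
  "condM k q r \<longleftrightarrow> (even r \<and> r \<le> 4*q) \<or> (odd r \<and> r + aa k + 4 \<le> 4*q)"

lemma ex_condM: "(\<exists>i j. j \<le> 2*i \<and> x = i * aa k + 2*j) \<longleftrightarrow> condM k (x div aa k) (x mod aa k)"
proof
  assume "\<exists>i j. j \<le> 2*i \<and> x = i * aa k + 2*j"
  then obtain i j where ij: "j \<le> 2*i" "x = i * aa k + 2*j" by blast
  define m where "m = (2*j) div aa k"
  define r where "r = (2*j) mod aa k"
  have s: "2*j = m * aa k + r" "r < aa k" by (simp_all add: m_def r_def aa_pos)
  have x: "x = (i+m) * aa k + r" using ij s by (simp add: algebra_simps)
  have q: "x div aa k = i + m" "x mod aa k = r" using x s(2) by simp_all
  have par: "even r \<longleftrightarrow> even m"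
  proof -
    have "even (m * aa k + r)" using s(1) by (metis dvd_triv_left)
    then show ?thesis using odd_aa by auto
  qed
  show "condM k (x div aa k) (x mod aa k)"
  proof (cases "even m")
    case True
    have "r \<le> 2*j" using s by simp
    then show ?thesis using True par ij q unfolding condM_def by auto
  next
    case False
    then have "m \<ge> 1" by (cases m) auto
    then have "aa k \<le> m * aa k" by simp
    then have "r + aa k \<le> 4*i" using s ij by linarith
    then show ?thesis using False par q \<open>m \<ge> 1\<close> unfolding condM_def by auto
  qed
next
  assume c: "condM k (x div aa k) (x mod aa k)"
  define q where "q = x div aa k"
  define r where "r = x mod aa k"
  have x: "x = q * aa k + r" by (simp add: q_def r_def)
  show "\<exists>i j. j \<le> 2*i \<and> x = i * aa k + 2*j"
  proof (cases "even r")
    case True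
    then show ?thesis using c x unfolding condM_def q_def[symmetric] r_def[symmetric]
      by (intro exI[of _ q] exI[of _ "r div 2"]) auto
  next
    case False
    have h: "r + aa k + 4 \<le> 4*q" using c False unfolding condM_def q_def[symmetric] r_def[symmetric] by auto
    have ev: "even (r + aa k)" using False odd_aa by simp
    have "q \<ge> 1" using h by simp
    then have "x = (q - 1) * aa k + 2 * ((r + aa k) div 2)" using x ev
      by (cases q) (auto simp: algebra_simps)
    moreover have "(r + aa k) div 2 \<le> 2 * (q - 1)" using h by simp
    ultimately show ?thesis by blast
  qed
qed

lemma gen_char: "x \<in> gen {aa k, aa k + 2, aa k + 4} \<longleftrightarrow> condM k (x div aa k) (x mod aa k)"
  using gen_sub gen_sup ex_condM by metis



lemma band:
  fixes a i x :: nat and lo hi :: int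
  assumes "0 \<le> lo" "hi < int a"
  shows "x \<in> ival (int i * int a + lo) (int i * int a + hi) \<longleftrightarrow>
     x div a = i \<and> lo \<le> int (x mod a) \<and> int (x mod a) \<le> hi"
proof
  assume "x \<in> ival (int i * int a + lo) (int i * int a + hi)"
  then have h: "int i * int a + lo \<le> int x" "int x \<le> int i * int a + hi" by (simp_all add: ival_def)
  have "int (a * i) \<le> int x" using h assms by (simp add: mult.commute)
  then have 1: "a * i \<le> x" by linarith
  have "int x < int (a * Suc i)" using h assms by (simp add: algebra_simps)
  then have 2: "x < a * Suc i" by linarith
  have d: "x div a = i" using div_nat_eqI[OF 1 2] .
  have "int (x mod a) = int x - int i * int a"
    using d by (metis add_diff_cancel_left' div_mult_mod_eq of_nat_add of_nat_mult add.commute)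
  then show "x div a = i \<and> lo \<le> int (x mod a) \<and> int (x mod a) \<le> hi" using d h by simp
next
  assume "x div a = i \<and> lo \<le> int (x mod a) \<and> int (x mod a) \<le> hi"
  moreover have "int x = int (x div a) * int a + int (x mod a)"
    by (metis div_mult_mod_eq of_nat_add of_nat_mult)
  ultimately show "x \<in> ival (int i * int a + lo) (int i * int a + hi)" by (simp add: ival_def)
qed

lemma band2:
  fixes a i x :: nat and lo hi :: int
  assumes "0 \<le> lo" "hi < int a"
  shows "x \<in> ival2 (int i * int a + lo) (int i * int a + hi) \<longleftrightarrow>
     x div a = i \<and> lo \<le> int (x mod a) \<and> int (x mod a) \<le> hi \<and> even (int (x mod a) - lo)"
proof -
  have e: "int x = int (x div a) * int a + int (x mod a)"
    by (metis div_mult_mod_eq of_nat_add of_nat_mult)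
  show ?thesis
  proof (cases "x div a = i")
    case True
    have eq: "int x - (int i * int a + lo) = int (x mod a) - lo" using e True by simp
    show ?thesis unfolding ival2_def mem_Collect_eq eq band[OF assms] by blast
  next
    case False
    then show ?thesis unfolding ival2_def using band[OF assms, of x i] by auto
  qed
qed



lemma even_int_sub2: "even (int r - 2*z) \<longleftrightarrow> even r" for z :: int
  by simp

lemma arith_H2:
  fixes q r t e k :: nat and X :: int
  assumes "r < 6*k+1" "2*t + e = 3*k" "e \<le> 1" and hX: "2*X + 4*int t + 4 + 2*int e = 4*int q"
  shows "((q=0 \<and> r=0) \<or> (1 \<le> q \<and> q \<le> t \<and> even r \<and> r \<le> 4*q) \<or>
     (t+1 \<le> q \<and> q \<le> 3*k \<and> (int r \<le> 2*X \<or>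
        (2*(X + 1) \<le> int r \<and> int r \<le> 2*(2*int t + int e) \<and> even r))) \<or> 3*k+1 \<le> q)
   \<longleftrightarrow> ((even r \<and> r \<le> 4*q) \<or> (odd r \<and> r + (6*k+1) + 4 \<le> 4*q))"
proof -
  obtain m where "r = 2*m \<or> r = 2*m+1" by (metis evenE oddE)
  then show ?thesis
  proof
    assume r: "r = 2*m"
    have e1: "int r \<le> 2*X \<longleftrightarrow> int m \<le> X" using r by auto
    have e2: "2*(X+1) \<le> int r \<longleftrightarrow> X + 1 \<le> int m" using r by auto
    have e3: "int r \<le> 2*(2*int t + int e) \<longleftrightarrow> int m \<le> 2*int t + int e" using r by auto
    show ?thesis unfolding e1 e2 e3 using assms r by auto
  next
    assume r: "r = 2*m+1"
    have e1: "int r \<le> 2*X \<longleftrightarrow> int m + 1 \<le> X" using r by presburger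
    show ?thesis unfolding e1 using assms r by auto
  qed
qed

lemma arith_H:
  fixes q r t e k :: nat
  assumes "r < 6*k+1" "2*t + e = 3*k" "e \<le> 1"
  shows "((q=0 \<and> r=0) \<or> (1 \<le> q \<and> q \<le> t \<and> even r \<and> r \<le> 4*q) \<or>
     (t+1 \<le> q \<and> q \<le> 3*k \<and> (int r \<le> 2*(2*(int q - int t - 1) - int e) \<or>
        (2*(2*(int q - int t - 1) - int e + 1) \<le> int r \<and> int r \<le> 2*(2*int t + int e)
          \<and> even (int r - 2*(2*(int q - int t - 1) - int e + 1))))) \<or> 3*k+1 \<le> q)
   \<longleftrightarrow> ((even r \<and> r \<le> 4*q) \<or> (odd r \<and> r + (6*k+1) + 4 \<le> 4*q))"
proof -
  have "2*(2*(int q - int t - 1) - int e) + 4*int t + 4 + 2*int e = 4*int q" by simp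
  from arith_H2[OF assms this] show ?thesis unfolding even_int_sub2 by (simp only: add.assoc)
qed



lemma Hset_char: "x \<in> Hset k \<longleftrightarrow> condM k (x div aa k) (x mod aa k)"
proof -
  define a t e q r where "a = aa k" "t = tt k" "e = eps k" "q = x div a" "r = x mod a"
  have te: "2*t + e = 3*k" "e \<le> 1" using tt_eps[of k] eps_le[of k] by (simp_all add: a_t_e_q_r_def)
  have a: "a = 6*k+1" by (simp add: a_t_e_q_r_def aa_def)
  have ra: "r < 6*k+1" using a by (simp add: a_t_e_q_r_def)
  have tei: "2 * int t + int e = 3 * int k" "int e \<le> 1" using te by linarith+
  have ai: "int a = 6 * int k + 1" using a by simp
  have hA: "x \<in> Aset k i \<longleftrightarrow> q = i \<and> even r \<and> r \<le> 4*i" if "i \<le> t" for i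
  proof -
    have "Aset k i = ival2 (int i * int a + 0) (int i * int a + 4 * int i)"
      by (simp add: Aset_def a_t_e_q_r_def)
    moreover have "4 * int i < int a" using that tei ai by (simp add: algebra_simps)
    ultimately show ?thesis using band2[of 0 "4 * int i" a x i] by (auto simp: a_t_e_q_r_def)
  qed
  have hB: "x \<in> Bset k i \<longleftrightarrow> q = i \<and> int r \<le> 2*(2*(int i - int t - 1) - int e)"
    if "t+1 \<le> i" "i \<le> 3*k" for i
  proof -
    have "Bset k i = ival (int i * int a + 0) (int i * int a + 2*(2*(int i - int t - 1) - int e))"
      by (simp add: Bset_def a_t_e_q_r_def)
    moreover have "int i \<le> 3 * int k" using that by linarith
    then have "2*(2*(int i - int t - 1) - int e) < int a" using that tei ai by (simp add: algebra_simps)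
    ultimately show ?thesis using band[of 0 _ a x i] by (auto simp: a_t_e_q_r_def)
  qed
  have hC: "x \<in> Cset k i \<longleftrightarrow> q = i \<and> 2*(2*(int i - int t - 1) - int e + 1) \<le> int r
       \<and> int r \<le> 2*(2*int t + int e) \<and> even (int r - 2*(2*(int i - int t - 1) - int e + 1))"
    if "t+1 \<le> i" for i
  proof -
    have "Cset k i = ival2 (int i * int a + 2*(2*(int i - int t - 1) - int e + 1))
        (int i * int a + 2*(2*int t + int e))"
      by (simp add: Cset_def a_t_e_q_r_def)
    moreover have "2*(2*int t + int e) < int a" using that tei ai by (simp add: algebra_simps)
    moreover have "0 \<le> 2*(2*(int i - int t - 1) - int e + 1)" using that tei by (simp add: algebra_simps)
    ultimately show ?thesis using band2[of "2*(2*(int i - int t - 1) - int e + 1)" _ a x i]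
      by (auto simp: a_t_e_q_r_def)
  qed
  have hR: "x \<in> {(2 * tt k + eps k + 1) * aa k..} \<longleftrightarrow> 3*k+1 \<le> q"
    using less_eq_div_iff_mult_less_eq[of a "3*k+1" x] te a
    by (simp add: a_t_e_q_r_def)
  have h0: "x = 0 \<longleftrightarrow> q = 0 \<and> r = 0"
    by (metis a_t_e_q_r_def(4,5) div_0 div_mult_mod_eq mod_0 mult_0 add_0)
  have "x \<in> Hset k \<longleftrightarrow> ((q=0 \<and> r=0) \<or> (1 \<le> q \<and> q \<le> t \<and> even r \<and> r \<le> 4*q) \<or>
     (t+1 \<le> q \<and> q \<le> 3*k \<and> (int r \<le> 2*(2*(int q - int t - 1) - int e) \<or>
        (2*(2*(int q - int t - 1) - int e + 1) \<le> int r \<and> int r \<le> 2*(2*int t + int e)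
          \<and> even (int r - 2*(2*(int q - int t - 1) - int e + 1))))) \<or> 3*k+1 \<le> q)"
  proof -
    have "x \<in> Hset k \<longleftrightarrow> x = 0 \<or> (\<exists>i\<in>{1..t}. x \<in> Aset k i)
       \<or> (\<exists>i\<in>{t+1..3*k}. x \<in> Bset k i \<or> x \<in> Cset k i) \<or> x \<in> {(2 * tt k + eps k + 1) * aa k..}"
      unfolding Hset_def using te by (auto simp: a_t_e_q_r_def)
    also have "(\<exists>i\<in>{1..t}. x \<in> Aset k i) \<longleftrightarrow> (1 \<le> q \<and> q \<le> t \<and> even r \<and> r \<le> 4*q)"
      using hA by auto
    also have "(\<exists>i\<in>{t+1..3*k}. x \<in> Bset k i \<or> x \<in> Cset k i) \<longleftrightarrow>
       (t+1 \<le> q \<and> q \<le> 3*k \<and> (int r \<le> 2*(2*(int q - int t - 1) - int e) \<or>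
        (2*(2*(int q - int t - 1) - int e + 1) \<le> int r \<and> int r \<le> 2*(2*int t + int e)
          \<and> even (int r - 2*(2*(int q - int t - 1) - int e + 1)))))"
      using hB hC by auto
    finally show ?thesis using h0 hR by blast
  qed
  also have "\<dots> \<longleftrightarrow> condM k q r"
    unfolding condM_def a[unfolded a_t_e_q_r_def] by (rule arith_H[OF ra te])
  finally show ?thesis by (simp add: a_t_e_q_r_def)
qed

theorem gen_eq_H: "gen {aa k, aa k + 2, aa k + 4} = Hset k"
  using gen_char Hset_char by blast



lemma ival2_sub: "ival2 u v \<subseteq> ival u v" by (auto simp: ival2_def)
lemma ival_ne: "0 \<le> u \<Longrightarrow> u \<le> v \<Longrightarrow> ival u v \<noteq> {}"
  by (auto simp: ival_def intro!: exI[of _ "nat u"])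
lemma ival2_ne: "0 \<le> u \<Longrightarrow> u \<le> v \<Longrightarrow> ival2 u v \<noteq> {}"
proof -
  assume "0 \<le> u" "u \<le> v"
  then have h1: "u \<le> int (nat u)" "int (nat u) \<le> v" by simp_all
  have "int (nat u) - u = 0" using \<open>0 \<le> u\<close> by simp
  then have "even (int (nat u) - u)" by (metis dvd_0_right)
  then have "nat u \<in> ival2 u v" unfolding ival2_def ival_def using h1 by blast
  then show ?thesis by blast
qed
lemma ival_empty: "v < u \<Longrightarrow> ival u v = {}" by (auto simp: ival_def)

lemma sl: "X \<subseteq> ival u1 v1 \<Longrightarrow> Y \<subseteq> ival u2 v2 \<Longrightarrow> X \<noteq> {} \<Longrightarrow> Y \<noteq> {} \<Longrightarrow> v1 < u2 \<Longrightarrow> X <\<^sub>s Y"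
  unfolding set_less_def ival_def by fastforce
lemma sl_ray: "X \<subseteq> ival u1 v1 \<Longrightarrow> X \<noteq> {} \<Longrightarrow> v1 < int n \<Longrightarrow> X <\<^sub>s {n..}"
  unfolding set_less_def ival_def by fastforce

lemma part2:
  assumes "0 < k"
  shows "(\<forall>i. 1 \<le> i \<and> i \<le> tt k - 1 \<longrightarrow> Aset k i <\<^sub>s Aset k (i + 1))
       \<and> (even k \<longrightarrow> Aset k (tt k) <\<^sub>s Bset k (tt k + 1) \<and> Bset k (tt k + 1) <\<^sub>s Cset k (tt k + 1))
       \<and> (odd k \<longrightarrow> Bset k (tt k + 1) = {} \<and> Aset k (tt k) <\<^sub>s Cset k (tt k + 1))
       \<and> (\<forall>i. tt k + 2 \<le> i \<and> i \<le> 2 * tt k + eps k \<longrightarrow> Bset k i <\<^sub>s Cset k i)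
       \<and> (\<forall>i. tt k + 1 \<le> i \<and> i \<le> 2 * tt k + eps k - 1 \<longrightarrow> Cset k i <\<^sub>s Bset k (i + 1))
       \<and> Cset k (2 * tt k + eps k) <\<^sub>s {(2 * tt k + eps k + 1) * aa k..}"
proof -
  define a t e where "a = aa k" "t = tt k" "e = eps k"
  have te: "2*t + e = 3*k" "e \<le> 1" using tt_eps[of k] eps_le[of k] by (simp_all add: a_t_e_def)
  have tei: "2 * int t + int e = 3 * int k" "int e \<le> 1" "0 \<le> int e" using te by linarith+
  have ai: "int a = 6 * int k + 1" by (simp add: a_t_e_def aa_def)
  have t1: "1 \<le> t" using assms te by linarith
  have ev: "even k \<Longrightarrow> e = 0" "odd k \<Longrightarrow> e = 1" by (simp_all add: a_t_e_def eps_def)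
  have A: "Aset k i \<subseteq> ival (int i * int a) (int i * int a + 4 * int i)"
          "Aset k i \<noteq> {}" for i
    unfolding Aset_def a_t_e_def[symmetric] by (rule ival2_sub, rule ival2_ne) auto
  have B: "Bset k i = ival (int i * int a) (int i * int a + 2 * (2 * (int i - int t - 1) - int e))" for i
    unfolding Bset_def a_t_e_def[symmetric] ..
  have C: "Cset k i \<subseteq> ival (int i * int a + 2 * (2 * (int i - int t - 1) - int e + 1)) (int i * int a + 2 * (2 * int t + int e))"
    for i unfolding Cset_def a_t_e_def[symmetric] by (rule ival2_sub)
  have Cne: "Cset k i \<noteq> {}" if "t+1 \<le> i" "i \<le> 2*t+e" for i
  proof -
    have f: "int t + 1 \<le> int i" "int i \<le> 2*int t + int e" "0 \<le> int i * int a" "0 \<le> int a * int i"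
      using that by simp_all
    have g1: "0 \<le> 2*(2*(int i - int t - 1) - int e + 1)" using f tei by (simp add: algebra_simps)
    have g2: "2*(2*(int i - int t - 1) - int e + 1) \<le> 2 * (2 * int t + int e)" using f tei by (simp add: algebra_simps)
    show ?thesis unfolding Cset_def a_t_e_def[symmetric]
      by (rule ival2_ne) (use g1 g2 f in simp_all)
  qed
  have Bne: "Bset k i \<noteq> {}" if "t+2 \<le> i \<or> (t + 1 = i \<and> e = 0)" for i
  proof -
    have "2 * (2 * (int i - int t - 1) - int e) \<ge> 0" using that tei by (auto simp: algebra_simps)
    then show ?thesis unfolding B by (intro ival_ne) auto
  qed
  have p1: "Aset k i <\<^sub>s Aset k (i + 1)" if "1 \<le> i" "i \<le> t - 1" for i
  proof (rule sl[OF A(1) A(1) A(2) A(2)])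
    have "int i \<le> int t" using that by linarith
    then show "int i * int a + 4 * int i < int (i + 1) * int a" using tei ai by (simp add: algebra_simps)
  qed
  have p2: "Aset k t <\<^sub>s Bset k (t + 1) \<and> Bset k (t + 1) <\<^sub>s Cset k (t + 1)" if "even k"
  proof
    show "Aset k t <\<^sub>s Bset k (t + 1)"
      by (rule sl[OF A(1) _ A(2) Bne]) (use ev(1)[OF that] tei ai t1 in \<open>auto simp: B algebra_simps\<close>)
    show "Bset k (t + 1) <\<^sub>s Cset k (t + 1)"
      by (rule sl[OF _ C Bne Cne]) (use ev(1)[OF that] tei ai t1 in \<open>auto simp: B algebra_simps\<close>)
  qed
  have p3: "Bset k (t + 1) = {} \<and> Aset k t <\<^sub>s Cset k (t + 1)" if "odd k"
  proof
    show "Bset k (t + 1) = {}" unfolding B by (rule ival_empty) (use ev(2)[OF that] in simp)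
    show "Aset k t <\<^sub>s Cset k (t + 1)"
      by (rule sl[OF A(1) C A(2) Cne]) (use ev(2)[OF that] tei ai in \<open>auto simp: algebra_simps\<close>)
  qed
  have p4: "Bset k i <\<^sub>s Cset k i" if "t + 2 \<le> i" "i \<le> 2 * t + e" for i
    by (rule sl[OF _ C Bne Cne]) (use that tei ai in \<open>auto simp: B algebra_simps\<close>)
  have p5: "Cset k i <\<^sub>s Bset k (i + 1)" if "t + 1 \<le> i" "i \<le> 2 * t + e - 1" for i
    by (rule sl[OF C _ Cne Bne]) (use that tei ai in \<open>auto simp: B algebra_simps\<close>)
  have p6: "Cset k (2 * t + e) <\<^sub>s {(2 * t + e + 1) * a..}"
  proof -
    have h: "2*(2*int t + int e) < int a" using tei ai by simp
    show ?thesis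
      apply (rule sl_ray[OF C Cne])
      using t1 apply simp
       apply simp
      using h by (simp add: algebra_simps)
  qed
  show ?thesis using p1 p2 p3 p4 p5 p6 unfolding a_t_e_def by blast
qed



definition hh :: "nat \<Rightarrow> nat \<Rightarrow> int" where
  "hh k j = 4 * int j - 2 * int (eps k)"

definition Sj :: "nat \<Rightarrow> nat \<Rightarrow> int" where
  "Sj k j = (int (tt k) + 1) * (int (tt k) + 1) - 1 + int j * (int j - 1)
     + int j * (3 * int k + 1 - int (eps k)) + (if 1 \<le> j then int (eps k) else 0)"

definition Tc :: "nat \<Rightarrow> nat \<Rightarrow> nat \<Rightarrow> int" where
  "Tc k q r = (if q \<le> tt k then int (q*q) + int (r div 2)
     else if q \<le> 3*k then
       (if int r \<le> hh k (q - tt k - 1) then Sj k (q - tt k - 1) + int r + 1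
        else Sj k (q - tt k - 1) + max (hh k (q - tt k - 1) + 1) 0 + (int r - hh k (q - tt k - 1)) div 2)
     else Sj k (tt k + eps k) + (int q - 3 * int k - 1) * int (aa k) + int r + 1)"

definition TT :: "nat \<Rightarrow> nat \<Rightarrow> int" where
  "TT k y = Tc k (y div aa k) (y mod aa k)"

definition nxt :: "nat \<Rightarrow> nat \<Rightarrow> nat" where
  "nxt k y = (if y div aa k \<le> tt k then
       (if y mod aa k < 4 * (y div aa k) then y + 2 else (y div aa k + 1) * aa k)
     else if y div aa k \<le> 3*k \<and> hh k (y div aa k - tt k - 1) \<le> int (y mod aa k) \<and> y mod aa k < 6*k
       then y + 2 else y + 1)"

lemma coord: "r < aa k \<Longrightarrow> (q * aa k + r) div aa k = q \<and> (q * aa k + r) mod aa k = r"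
  by (simp add: aa_pos)

lemma TT_coord: "r < aa k \<Longrightarrow> TT k (q * aa k + r) = Tc k q r"
  by (simp add: TT_def coord)

lemma nxt1: "q \<le> tt k \<Longrightarrow> r < aa k \<Longrightarrow>
   nxt k (q * aa k + r) = (if r < 4*q then q * aa k + r + 2 else (q+1) * aa k)"
  by (simp add: nxt_def coord)

lemma nxt2: "tt k < q \<Longrightarrow> q \<le> 3*k \<Longrightarrow> r < aa k \<Longrightarrow>
   nxt k (q * aa k + r) = (if hh k (q - tt k - 1) \<le> int r \<and> r < 6*k then q * aa k + r + 2 else q * aa k + r + 1)"
  by (simp add: nxt_def coord)

lemma nxt3: "3*k < q \<Longrightarrow> r < aa k \<Longrightarrow> nxt k (q * aa k + r) = q * aa k + r + 1"
proof -
  assume "3*k < q" "r < aa k"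
  moreover have "tt k \<le> 3*k" using tt_eps[of k] by linarith
  ultimately show ?thesis by (simp add: nxt_def coord)
qed

lemma condM1: "q \<le> tt k \<Longrightarrow> r < aa k \<Longrightarrow> condM k q r \<longleftrightarrow> even r \<and> r \<le> 4*q"
  using tt_eps[of k] by (auto simp: condM_def aa_def)

lemma condM2: "tt k < q \<Longrightarrow> q \<le> 3*k \<Longrightarrow> r < aa k \<Longrightarrow>
   condM k q r \<longleftrightarrow> even r \<or> int r + 1 \<le> hh k (q - tt k - 1)"
proof -
  assume a: "tt k < q" "q \<le> 3*k" "r < aa k"
  have te: "2 * int (tt k) + int (eps k) = 3 * int k" using tt_eps[of k] by linarith
  have h: "hh k (q - tt k - 1) = 4 * int q - 4 * int (tt k) - 4 - 2 * int (eps k)"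
    using a by (simp add: hh_def of_nat_diff)
  show ?thesis unfolding condM_def h using a te tt_eps[of k] eps_le[of k] by (auto simp: aa_def)
qed

lemma condM3: "3*k < q \<Longrightarrow> r < aa k \<Longrightarrow> condM k q r"
  by (auto simp: condM_def aa_def) presburger

lemma Tc1: "q \<le> tt k \<Longrightarrow> Tc k q r = int (q*q) + int (r div 2)"
  by (simp add: Tc_def)

lemma Tc2: "tt k < q \<Longrightarrow> q \<le> 3*k \<Longrightarrow> j = q - tt k - 1 \<Longrightarrow>
  Tc k q r = (if int r \<le> hh k j then Sj k j + int r + 1
        else Sj k j + max (hh k j + 1) 0 + (int r - hh k j) div 2)"
  by (simp add: Tc_def)

lemma Tc3: "3*k < q \<Longrightarrow> Tc k q r = Sj k (tt k + eps k) + (int q - 3 * int k - 1) * int (aa k) + int r + 1"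
  using tt_eps[of k] by (simp add: Tc_def)

lemma Sj_step: "Sj k (j+1) = Sj k j + 2 * int j + 3 * int k + 1 - int (eps k) + (if j = 0 then int (eps k) else 0)"
  by (simp add: Sj_def algebra_simps)



lemma kfacts:
  assumes "0 < k"
  shows "2 * tt k + eps k = 3*k" "eps k \<le> 1" "aa k = 6*k+1" "1 \<le> tt k" "tt k + 1 \<le> 3*k"
    "2 * int (tt k) + int (eps k) = 3 * int k"
  using tt_eps[of k] eps_le[of k] assms by (auto simp: aa_def)

lemma hh_even: "even (hh k j)" by (simp add: hh_def)

lemma stepA1:
  assumes "0 < k" "r < aa k" "condM k q r" "q \<le> tt k"
  shows "\<exists>r'. r < r' \<and> r' \<le> aa k \<and> nxt k (q * aa k + r) = q * aa k + r' \<and>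
     (\<forall>r''. r < r'' \<and> r'' < r' \<longrightarrow> \<not> condM k q r'') \<and>
     (if r' < aa k then condM k q r' \<and> Tc k q r' = Tc k q r + 1
      else condM k (q+1) 0 \<and> Tc k (q+1) 0 = Tc k q r + 1)"
proof -
  note kf = kfacts[OF assms(1)]
  have er: "even r" "r \<le> 4*q" using condM1[OF assms(4,2)] assms(3) by auto
  show ?thesis
  proof (cases "r < 4*q")
    case True
    have lt: "r + 2 < aa k" using True assms(4) kf(1,3) er(1) by presburger
    show ?thesis
    proof (intro exI[of _ "r+2"] conjI allI impI)
      show "nxt k (q * aa k + r) = q * aa k + (r + 2)" using nxt1[OF assms(4,2)] True by simp
      show "\<not> condM k q r''" if "r < r'' \<and> r'' < r + 2" for r''
      proof -
        have "r'' = r + 1" using that by linarith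
        then show ?thesis using condM1[OF assms(4)] er lt by auto
      qed
      have "condM k q (r+2)" using condM1[OF assms(4) lt] er True by auto
      moreover have "Tc k q (r+2) = Tc k q r + 1" using Tc1[OF assms(4)] er by auto
      ultimately show "if r + 2 < aa k then condM k q (r + 2) \<and> Tc k q (r + 2) = Tc k q r + 1
        else condM k (q + 1) 0 \<and> Tc k (q + 1) 0 = Tc k q r + 1" using lt by simp
    qed (use lt in auto)
  next
    case False
    then have r4: "r = 4*q" using er by linarith
    show ?thesis
    proof (intro exI[of _ "aa k"] conjI allI impI)
      show "r < aa k" by (rule assms(2))
      show "nxt k (q * aa k + r) = q * aa k + aa k" using nxt1[OF assms(4,2)] False by simp
      show "\<not> condM k q r''" if "r < r'' \<and> r'' < aa k" for r''
        using condM1[OF assms(4)] that r4 by auto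
      have c: "condM k (q+1) 0 \<and> Tc k (q+1) 0 = Tc k q r + 1"
      proof (cases "q + 1 \<le> tt k")
        case True
        then show ?thesis using condM1[OF True, of 0] Tc1[OF True] Tc1[OF assms(4)] r4 kf
          by (simp add: algebra_simps)
      next
        case F: False
        then have qt: "q = tt k" using assms(4) by linarith
        have c1: "condM k (q+1) 0" using condM2[of k "q+1" 0] qt kf by simp
        have T2: "Tc k (q+1) 0 = (if 0 \<le> hh k 0 then Sj k 0 + 1 else Sj k 0 + max (hh k 0 + 1) 0 + (0 - hh k 0) div 2)"
          using Tc2[of k "q+1" 0] qt kf by simp
        have "Tc k (q+1) 0 = Sj k 0 + 1"
        proof (cases "eps k = 0")
          case True then show ?thesis using T2 by (simp add: hh_def)
        next
          case False then have "eps k = 1" using kf by linarith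
          then show ?thesis using T2 by (simp add: hh_def)
        qed
        moreover have "Sj k 0 = int (q*q) + int (r div 2)" using qt r4 by (simp add: Sj_def algebra_simps)
        ultimately show ?thesis using c1 Tc1[OF assms(4)] by simp
      qed
      then show "if aa k < aa k then condM k q (aa k) \<and> Tc k q (aa k) = Tc k q r + 1
        else condM k (q + 1) 0 \<and> Tc k (q + 1) 0 = Tc k q r + 1" by simp
    qed simp
  qed
qed



lemma stepA2:
  assumes "0 < k" "r < aa k" "condM k q r" "tt k < q" "q \<le> 3*k"
  shows "\<exists>r'. r < r' \<and> r' \<le> aa k \<and> nxt k (q * aa k + r) = q * aa k + r' \<and>
     (\<forall>r''. r < r'' \<and> r'' < r' \<longrightarrow> \<not> condM k q r'') \<and>
     (if r' < aa k then condM k q r' \<and> Tc k q r' = Tc k q r + 1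
      else condM k (q+1) 0 \<and> Tc k (q+1) 0 = Tc k q r + 1)"
proof -
  note kf = kfacts[OF assms(1)]
  define j where "j = q - tt k - 1"
  define h where "h = hh k j"
  have qj: "q = tt k + 1 + j" using assms(4) j_def by simp
  have hj: "h = 4 * int j - 2 * int (eps k)" by (simp add: h_def hh_def)
  have hb: "h \<le> 6 * int k - 4" "-2 \<le> h" using hj qj assms(5) kf by linarith+
  have hev: "even h" by (simp add: hj)
  have cM: "condM k q x \<longleftrightarrow> even x \<or> int x + 1 \<le> h" if "x < aa k" for x
    using condM2[OF assms(4,5) that] by (simp add: h_def j_def)
  have T: "Tc k q x = (if int x \<le> h then Sj k j + int x + 1 else Sj k j + max (h + 1) 0 + (int x - h) div 2)" for x
    using Tc2[OF assms(4,5) j_def] by (simp add: h_def)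
  have nx: "nxt k (q * aa k + r) = (if h \<le> int r \<and> r < 6*k then q * aa k + r + 2 else q * aa k + r + 1)"
    using nxt2[OF assms(4,5,2)] by (simp add: h_def j_def)
  have cr: "even r \<or> int r + 1 \<le> h" using cM[OF assms(2)] assms(3) by simp
  consider (A) "int r < h" | (B) "h \<le> int r" "r < 6*k" | (C) "r = 6*k"
    using assms(2) kf by linarith
  then show ?thesis
  proof cases
    case A
    have lt: "r + 1 < aa k" using A hb kf by linarith
    show ?thesis
    proof (intro exI[of _ "r+1"] conjI allI impI)
      show "nxt k (q * aa k + r) = q * aa k + (r + 1)" using nx A by simp
      have "condM k q (r+1)" unfolding cM[OF lt] using A hev by presburger
      moreover have "Tc k q (r+1) = Tc k q r + 1" unfolding T using A by simp
      ultimately show "if r + 1 < aa k then condM k q (r + 1) \<and> Tc k q (r + 1) = Tc k q r + 1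
        else condM k (q + 1) 0 \<and> Tc k (q + 1) 0 = Tc k q r + 1" using lt by simp
    qed (use lt in auto)
  next
    case B
    have er: "even r" using cr B by linarith
    have lt: "r + 2 < aa k" using B er kf by presburger
    show ?thesis
    proof (intro exI[of _ "r+2"] conjI allI impI)
      show "nxt k (q * aa k + r) = q * aa k + (r + 2)" using nx B by simp
      show "\<not> condM k q r''" if "r < r'' \<and> r'' < r + 2" for r''
      proof -
        have "r'' = r + 1" using that by linarith
        then show ?thesis using cM lt er B by auto
      qed
      have "condM k q (r+2)" unfolding cM[OF lt] using er by simp
      moreover have "Tc k q (r+2) = Tc k q r + 1"
      proof (cases "int r \<le> h")
        case True
        then have "int r = h" using B by linarith
        then show ?thesis unfolding T using hb by simp
      next
        case False
        have "(int (r+2) - h) div 2 = (int r - h) div 2 + 1" by simp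
        then show ?thesis unfolding T using False by simp
      qed
      ultimately show "if r + 2 < aa k then condM k q (r + 2) \<and> Tc k q (r + 2) = Tc k q r + 1
        else condM k (q + 1) 0 \<and> Tc k (q + 1) 0 = Tc k q r + 1" using lt by simp
    qed (use lt in auto)
  next
    case C
    have key: "Sj k (j+1) + 1 = Tc k q r + 1"
    proof -
      have "Tc k q r = Sj k j + max (h + 1) 0 + (6 * int k - h) div 2"
        unfolding T using C hb by simp
      moreover have "2 * int j + 3 * int k + 1 - int (eps k) + (if j = 0 then int (eps k) else 0)
          = max (h + 1) 0 + (6 * int k - h) div 2"
        using hj kf by (simp add: max_def)
      ultimately show ?thesis using Sj_step[of k j] by simp
    qed
    show ?thesis
    proof (intro exI[of _ "aa k"] conjI allI impI)
      show "r < aa k" by (rule assms(2))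
      show "nxt k (q * aa k + r) = q * aa k + aa k" using nx C kf by simp
      show "\<not> condM k q r''" if "r < r'' \<and> r'' < aa k" for r'' using that C kf by linarith
      have "condM k (q+1) 0 \<and> Tc k (q+1) 0 = Tc k q r + 1"
      proof (cases "q + 1 \<le> 3*k")
        case True
        have "Tc k (q+1) 0 = Sj k (j+1) + 1"
          using Tc2[of k "q+1" "j+1" 0] True qj eps_le[of k] by (simp add: hh_def)
        moreover have "condM k (q+1) 0" using condM2[of k "q+1" 0] True qj kf by simp
        ultimately show ?thesis using key by simp
      next
        case False
        then have q3: "q = 3*k" using assms(5) by simp
        then have "tt k + eps k = j + 1" using qj kf by linarith
        then have "Tc k (q+1) 0 = Sj k (j+1) + 1" using Tc3[of k "q+1" 0] q3 by simp
        moreover have "condM k (q+1) 0" using condM3[of k "q+1" 0] q3 kf by simp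
        ultimately show ?thesis using key by simp
      qed
      then show "if aa k < aa k then condM k q (aa k) \<and> Tc k q (aa k) = Tc k q r + 1
        else condM k (q + 1) 0 \<and> Tc k (q + 1) 0 = Tc k q r + 1" by simp
    qed simp
  qed
qed

lemma stepA3:
  assumes "0 < k" "r < aa k" "3*k < q"
  shows "\<exists>r'. r < r' \<and> r' \<le> aa k \<and> nxt k (q * aa k + r) = q * aa k + r' \<and>
     (\<forall>r''. r < r'' \<and> r'' < r' \<longrightarrow> \<not> condM k q r'') \<and>
     (if r' < aa k then condM k q r' \<and> Tc k q r' = Tc k q r + 1
      else condM k (q+1) 0 \<and> Tc k (q+1) 0 = Tc k q r + 1)"
proof (intro exI[of _ "r+1"] conjI allI impI)
  show "nxt k (q * aa k + r) = q * aa k + (r + 1)" using nxt3[OF assms(3,2)] by simp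
  have c: "condM k q (r+1)" if "r + 1 < aa k" using condM3[OF assms(3) that] .
  have c2: "condM k (q+1) 0" using condM3[of k "q+1" 0] assms by (simp add: aa_def)
  have t1: "Tc k q (r+1) = Tc k q r + 1" using Tc3[OF assms(3), of "r+1"] Tc3[OF assms(3), of r] by simp
  have t2: "Tc k (q+1) 0 = Tc k q r + 1" if "r + 1 = aa k"
  proof -
    have "int (aa k) = int r + 1" using that by simp
    then show ?thesis using Tc3[OF assms(3), of r] Tc3[of k "q+1" 0] assms(3) by (simp add: algebra_simps)
  qed
  show "if r + 1 < aa k then condM k q (r + 1) \<and> Tc k q (r + 1) = Tc k q r + 1
      else condM k (q + 1) 0 \<and> Tc k (q + 1) 0 = Tc k q r + 1"
    using c c2 t1 t2 assms(2) by auto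
qed (use assms in auto)



lemma stepA:
  assumes "0 < k" "r < aa k" "condM k q r"
  shows "\<exists>r'. r < r' \<and> r' \<le> aa k \<and> nxt k (q * aa k + r) = q * aa k + r' \<and>
     (\<forall>r''. r < r'' \<and> r'' < r' \<longrightarrow> \<not> condM k q r'') \<and>
     (if r' < aa k then condM k q r' \<and> Tc k q r' = Tc k q r + 1
      else condM k (q+1) 0 \<and> Tc k (q+1) 0 = Tc k q r + 1)"
proof -
  consider "q \<le> tt k" | "tt k < q" "q \<le> 3*k" | "3*k < q" by linarith
  then show ?thesis
    by cases (use stepA1[OF assms] stepA2[OF assms] stepA3[OF assms(1,2)] in auto)
qed

lemma between:
  fixes a q r r' x :: nat
  assumes "q * a + r < x" "x < q * a + r'" "r' \<le> a"
  shows "x div a = q \<and> r < x mod a \<and> x mod a < r'"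
proof -
  have 1: "a * q \<le> x" using assms by (simp add: mult.commute)
  have 2: "x < a * Suc q" using assms by (simp add: algebra_simps)
  have d: "x div a = q" by (rule div_nat_eqI[OF 1 2])
  have "x mod a = x - q * a" using d by (metis minus_div_mult_eq_mod)
  then show ?thesis using d assms by arith
qed

lemma stepH:
  assumes "0 < k" "y \<in> Hset k"
  shows "nxt k y \<in> Hset k \<and> y < nxt k y \<and> (\<forall>x. y < x \<and> x < nxt k y \<longrightarrow> x \<notin> Hset k)
    \<and> TT k (nxt k y) = TT k y + 1"
proof -
  define q r where "q = y div aa k" "r = y mod aa k"
  have y: "y = q * aa k + r" by (simp add: q_r_def)
  have ra: "r < aa k" by (simp add: q_r_def aa_pos)
  have c: "condM k q r" using assms(2) Hset_char q_r_def by simp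
  obtain r' where r': "r < r'" "r' \<le> aa k" "nxt k y = q * aa k + r'"
     "\<forall>r''. r < r'' \<and> r'' < r' \<longrightarrow> \<not> condM k q r''"
     "if r' < aa k then condM k q r' \<and> Tc k q r' = Tc k q r + 1
      else condM k (q+1) 0 \<and> Tc k (q+1) 0 = Tc k q r + 1"
    using stepA[OF assms(1) ra c] y by blast
  have T0: "TT k y = Tc k q r" using TT_coord[OF ra] y by simp
  have 1: "nxt k y \<in> Hset k \<and> TT k (nxt k y) = TT k y + 1"
  proof (cases "r' < aa k")
    case True
    then show ?thesis using r'(3,5) coord[OF True, of q] TT_coord[OF True] T0 Hset_char by simp
  next
    case False
    then have "r' = aa k" using r'(2) by simp
    then have n: "nxt k y = (q+1) * aa k + 0" using r'(3) by simp
    have e1: "TT k ((q+1) * aa k + 0) = Tc k (q+1) 0" by (rule TT_coord) (simp add: aa_pos)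
    have e2: "((q+1) * aa k + 0) div aa k = q+1 \<and> ((q+1) * aa k + 0) mod aa k = 0" by (rule coord) (simp add: aa_pos)
    show ?thesis using False r'(5) e1 e2 T0 Hset_char[of "(q+1) * aa k + 0" k]
      unfolding n by simp
  qed
  have 2: "\<forall>x. y < x \<and> x < nxt k y \<longrightarrow> x \<notin> Hset k"
  proof (intro allI impI)
    fix x assume "y < x \<and> x < nxt k y"
    then have "x div aa k = q \<and> r < x mod aa k \<and> x mod aa k < r'"
      using between[of q "aa k" r x r'] r' y by simp
    then show "x \<notin> Hset k" using r'(4) Hset_char by auto
  qed
  show ?thesis using 1 2 r'(1,3) y by simp
qed



lemma sq3: "((x::nat) * x) mod 3 = (if x mod 3 = 0 then 0 else 1)"
proof -
  have "(x * x) mod 3 = ((x mod 3) * (x mod 3)) mod 3" by (simp add: mod_mult_eq)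
  moreover have "x mod 3 < 3" by simp
  ultimately show ?thesis
    by (cases "x mod 3"; cases "x mod 3 - 1"; simp)
qed

lemma QQ3: "((tt k + 1) * (tt k + 1)) mod 3 = 1"
proof -
  have "(tt k + 1) mod 3 \<noteq> 0" using tt_mod3[of k] eps_le[of k] by presburger
  then show ?thesis using sq3[of "tt k + 1"] by simp
qed

lemma Sj_form: "Sj k j = int ((tt k + 1) * (tt k + 1)) - 1 + int (j*j) - int j + 3 * int (j*k)
   + (if eps k = 0 then int j else 0) + (if 1 \<le> j then int (eps k) else 0)"
proof (cases "eps k = 0")
  case True then show ?thesis by (simp add: Sj_def algebra_simps)
next
  case False then have "eps k = 1" using eps_le[of k] by linarith
  then show ?thesis by (simp add: Sj_def algebra_simps)
qed

lemma C1a: "(int (q*q) + int (2*q)) mod 3 \<noteq> 1"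
proof -
  define QQ where "QQ = q*q"
  have "QQ mod 3 = (if q mod 3 = 0 then 0 else 1)" using sq3 QQ_def by simp
  then show ?thesis unfolding QQ_def[symmetric] by presburger
qed

lemma C1b: "1 \<le> q \<Longrightarrow> (int (q*q) + int ((4*q - 2) div 2)) mod 3 = 1 \<Longrightarrow> q mod 3 = 2"
proof -
  assume a: "1 \<le> q" "(int (q*q) + int ((4*q - 2) div 2)) mod 3 = 1"
  define QQ where "QQ = q*q"
  have "QQ mod 3 = (if q mod 3 = 0 then 0 else 1)" using sq3 QQ_def by simp
  then show ?thesis using a unfolding QQ_def[symmetric] by presburger
qed

lemma C2: "1 \<le> j \<Longrightarrow> (Sj k j + hh k j) mod 3 \<noteq> 1"
proof -
  assume j: "1 \<le> j"
  define QQ JJ JK where "QQ = (tt k + 1) * (tt k + 1)" "JJ = j*j" "JK = j*k"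
  have n: "QQ mod 3 = 1" "JJ mod 3 = (if j mod 3 = 0 then 0 else 1)"
    using QQ3 sq3[of j] QQ_JJ_JK_def by simp_all
  have f: "int QQ mod 3 = 1" "int JJ mod 3 = (if int j mod 3 = 0 then 0 else 1)"
    using n by presburger+
  have s: "Sj k j = int QQ - 1 + int JJ - int j + 3 * int JK
   + (if eps k = 0 then int j else 0) + (if 1 \<le> j then int (eps k) else 0)"
    using Sj_form QQ_JJ_JK_def by simp
  consider "eps k = 0" | "eps k = 1" using eps_le[of k] by linarith
  then show ?thesis
  proof cases
    case 1
    then have "Sj k j + hh k j = int QQ - 1 + int JJ + 4 * int j + 3 * int JK"
      unfolding s hh_def using j by simp
    then show ?thesis using f by presburger
  next
    case 2
    then have "Sj k j + hh k j = int QQ - 1 + int JJ + 3 * int j - 1 + 3 * int JK"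
      unfolding s hh_def using j by simp
    then show ?thesis using f by presburger
  qed
qed

lemma C3: "(Sj k j + max (hh k j + 1) 0 + (6 * int k - 2 - hh k j) div 2) mod 3 \<noteq> 1"
proof -
  define QQ JJ JK where "QQ = (tt k + 1) * (tt k + 1)" "JJ = j*j" "JK = j*k"
  have n: "QQ mod 3 = 1" "JJ mod 3 = (if j mod 3 = 0 then 0 else 1)"
    using QQ3 sq3[of j] QQ_JJ_JK_def by simp_all
  have f: "int QQ mod 3 = 1" "int JJ mod 3 = (if int j mod 3 = 0 then 0 else 1)"
    using n by presburger+
  have s: "Sj k j = int QQ - 1 + int JJ - int j + 3 * int JK
   + (if eps k = 0 then int j else 0) + (if 1 \<le> j then int (eps k) else 0)"
    using Sj_form QQ_JJ_JK_def by simp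
  consider "eps k = 0" | "eps k = 1" "1 \<le> j" | "eps k = 1" "j = 0" using eps_le[of k] by linarith
  then show ?thesis
  proof cases
    case 1
    then have "Sj k j + max (hh k j + 1) 0 + (6 * int k - 2 - hh k j) div 2
       = int QQ - 1 + int JJ + 3 * int JK + 4 * int j + 1 + (6 * int k - 2 - 4 * int j) div 2"
      unfolding s hh_def by simp
    moreover have "(6 * int k - 2 - 4 * int j) div 2 = 3 * int k - 1 - 2 * int j" by presburger
    ultimately have "Sj k j + max (hh k j + 1) 0 + (6 * int k - 2 - hh k j) div 2
       = int QQ + int JJ + 3 * int JK + 2 * int j + 3 * int k - 1" by simp
    moreover have "(int QQ + int JJ + 3 * int JK + 2 * int j + 3 * int k - 1) mod 3 \<noteq> 1" using f by presburger
    ultimately show ?thesis by simp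
  next
    case 2
    then have "Sj k j + max (hh k j + 1) 0 + (6 * int k - 2 - hh k j) div 2
       = int QQ + int JJ - int j + 3 * int JK + 4 * int j - 1 + (6 * int k - 4 * int j) div 2"
      unfolding s hh_def by simp
    moreover have "(6 * int k - 4 * int j) div 2 = 3 * int k - 2 * int j" by presburger
    ultimately have "Sj k j + max (hh k j + 1) 0 + (6 * int k - 2 - hh k j) div 2
       = int QQ + int JJ + 3 * int JK + int j + 3 * int k - 1" by simp
    moreover have "(int QQ + int JJ + 3 * int JK + int j + 3 * int k - 1) mod 3 \<noteq> 1" using f by presburger
    ultimately show ?thesis by simp
  next
    case 3
    then have "Sj k j + max (hh k j + 1) 0 + (6 * int k - 2 - hh k j) div 2
       = int QQ - 1 + 3 * int k"
      unfolding s hh_def using QQ_JJ_JK_def by simp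
    moreover have "(int QQ - 1 + 3 * int k) mod 3 \<noteq> 1" using f by presburger
    ultimately show ?thesis by simp
  qed
qed



lemma blockB1:
  assumes "0 < k" "r < aa k" "condM k q r" "Tc k q r mod 3 = 1" "q \<le> tt k"
  shows "\<exists>d d2. nxt k (q * aa k + r) = q * aa k + r + d \<and> nxt k (q * aa k + r + d) = q * aa k + r + d + d2
    \<and> d mod 3 = d2 mod 3 \<and> d mod 3 \<noteq> 0"
proof -
  note kf = kfacts[OF assms(1)]
  have er: "even r" "r \<le> 4*q" using condM1[OF assms(5,2)] assms(3) by auto
  have T: "Tc k q r = int (q*q) + int (r div 2)" using Tc1[OF assms(5)] .
  have "r + 4 \<le> 4*q \<or> r + 2 = 4*q \<or> r = 4*q"
  proof -
    obtain m where "r = 2*m" using er(1) by blast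
    then show ?thesis using er(2) by presburger
  qed
  then consider "r + 4 \<le> 4*q" | "r + 2 = 4*q" | "r = 4*q" by blast
  then show ?thesis
  proof cases
    case 1
    have lt: "r + 2 < aa k" using 1 assms(5) kf by linarith
    have n1: "nxt k (q * aa k + r) = q * aa k + r + 2" using nxt1[OF assms(5,2)] 1 by simp
    have n2: "nxt k (q * aa k + r + 2) = q * aa k + r + 2 + 2" using nxt1[OF assms(5) lt] 1
      by (simp add: add.assoc)
    show ?thesis using n1 n2 by (intro exI[of _ 2]) auto
  next
    case 2
    have lt: "r + 2 < aa k" using 2 assms(5) kf by linarith
    have q1: "1 \<le> q" using 2 by linarith
    have r_eq: "r = 4*q - 2" using 2 by simp
    have "(int (q*q) + int ((4*q - 2) div 2)) mod 3 = 1" using assms(4) T unfolding r_eq by simp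
    then have q2: "q mod 3 = 2" using C1b q1 by blast
    have n1: "nxt k (q * aa k + r) = q * aa k + r + 2" using nxt1[OF assms(5,2)] 2 by simp
    have "nxt k (q * aa k + r + 2) = (q+1) * aa k" using nxt1[OF assms(5) lt] 2
      by (simp add: add.assoc)
    also have "\<dots> = q * aa k + r + 2 + (aa k - 4*q)" using 2 lt by simp
    finally have n2: "nxt k (q * aa k + r + 2) = q * aa k + r + 2 + (aa k - 4*q)" .
    have b: "4*q \<le> 6*k" "aa k = 6*k+1" using kf assms(5) by linarith+
    have "(aa k - 4*q) mod 3 = 2" unfolding b(2)
    proof -
      obtain p where "q = 3*p + 2" using q2 by (metis mod_div_mult_eq add.commute mult.commute)
      define X where "X = 2*k - 4*p - 3"
      have e: "6*k + 1 - 4*q = 3*X + 2" using b(1) \<open>q = 3*p + 2\<close> unfolding X_def by linarith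
      have "(3*X + 2) mod 3 = 2" by presburger
      then show "(6*k + 1 - 4*q) mod 3 = 2" by (simp only: e)
    qed
    then show ?thesis using n1 n2 by (intro exI[of _ 2] exI[of _ "aa k - 4*q"]) auto
  next
    case 3
    have "(int (q*q) + int (2*q)) mod 3 = 1" using assms(4) T 3 by simp
    then show ?thesis using C1a by blast
  qed
qed

lemma blockB2:
  assumes "0 < k" "r < aa k" "condM k q r" "Tc k q r mod 3 = 1" "tt k < q" "q \<le> 3*k"
  shows "\<exists>d d2. nxt k (q * aa k + r) = q * aa k + r + d \<and> nxt k (q * aa k + r + d) = q * aa k + r + d + d2
    \<and> d mod 3 = d2 mod 3 \<and> d mod 3 \<noteq> 0"
proof -
  note kf = kfacts[OF assms(1)]
  define j where "j = q - tt k - 1"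
  define h where "h = hh k j"
  have qj: "q = tt k + 1 + j" using assms(5) j_def by simp
  have hj: "h = 4 * int j - 2 * int (eps k)" by (simp add: h_def hh_def)
  have hb: "h \<le> 6 * int k - 4" "-2 \<le> h" using hj qj assms(6) kf by linarith+
  have cr: "even r \<or> int r + 1 \<le> h"
    using condM2[OF assms(5,6,2)] assms(3) by (simp add: h_def j_def)
  have T: "Tc k q x = (if int x \<le> h then Sj k j + int x + 1 else Sj k j + max (h + 1) 0 + (int x - h) div 2)" for x
    using Tc2[OF assms(5,6) j_def] by (simp add: h_def)
  have nx: "nxt k (q * aa k + x) = (if h \<le> int x \<and> x < 6*k then q * aa k + x + 2 else q * aa k + x + 1)"
    if "x < aa k" for x
    using nxt2[OF assms(5,6) that] by (simp add: h_def j_def)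
  have cases: "int r + 1 < h \<or> int r + 1 = h \<or> (h \<le> int r \<and> r + 4 \<le> 6*k) \<or> r + 2 = 6*k \<or> r = 6*k"
  proof (cases "even r")
    case True
    then obtain m where "r = 2*m" by blast
    then show ?thesis using assms(2) kf(3) by presburger
  next
    case False
    then show ?thesis using cr by linarith
  qed
  have eqd: "\<exists>d d2. nxt k (q * aa k + r) = q * aa k + r + d \<and> nxt k (q * aa k + r + d) = q * aa k + r + d + d2
    \<and> d mod 3 = d2 mod 3 \<and> d mod 3 \<noteq> 0" if "d = d2" "d mod 3 \<noteq> 0"
     "nxt k (q * aa k + r) = q * aa k + r + d" "nxt k (q * aa k + r + d) = q * aa k + r + d + d2" for d d2
    using that by blast
  show ?thesis
  proof -
    consider (i) "int r + 1 < h" | (ii) "int r + 1 = h" | (iii) "h \<le> int r" "r + 4 \<le> 6*k"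
      | (iv) "r + 2 = 6*k" "\<not> (int r + 1 = h)" "\<not> (int r + 1 < h)" | (v) "r = 6*k" using cases by blast
    then show ?thesis
    proof cases
      case i
      have lt: "r + 1 < aa k" using i hb kf by linarith
      show ?thesis
      proof (rule eqd[of 1 1])
        show "nxt k (q * aa k + r) = q * aa k + r + 1" using nx[OF assms(2)] i by auto
        show "nxt k (q * aa k + r + 1) = q * aa k + r + 1 + 1" using nx[OF lt] i by (auto simp: add.assoc)
      qed simp_all
    next
      case ii
      have "Tc k q r = Sj k j + hh k j" unfolding T using ii by (simp add: h_def)
      moreover have "1 \<le> j" using ii hj kf by linarith
      ultimately show ?thesis using C2[of j k] assms(4) by simp
    next
      case iii
      have lt: "r + 2 < aa k" using iii kf by linarith
      show ?thesis
      proof (rule eqd[of 2 2])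
        show "nxt k (q * aa k + r) = q * aa k + r + 2" using nx[OF assms(2)] iii by auto
        show "nxt k (q * aa k + r + 2) = q * aa k + r + 2 + 2" using nx[OF lt] iii by (auto simp: add.assoc)
      qed simp_all
    next
      case iv
      have "int r = 6 * int k - 2" using iv by linarith
      moreover have "\<not> int r \<le> h" using iv hb by linarith
      ultimately have "Tc k q r = Sj k j + max (hh k j + 1) 0 + (6 * int k - 2 - hh k j) div 2"
        unfolding T by (simp add: h_def)
      then show ?thesis using C3[of k j] assms(4) by simp
    next
      case v
      have e1: "q * aa k + r + 1 = (q+1) * aa k + 0" using v kf by simp
      have n1: "nxt k (q * aa k + r) = q * aa k + r + 1" using nx[OF assms(2)] v by auto
      have n2: "nxt k ((q+1) * aa k + 0) = (q+1) * aa k + 0 + 1"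
      proof (cases "q + 1 \<le> 3*k")
        case True
        have "tt k < q + 1" using assms(5) by simp
        from nxt2[OF this True, of 0] show ?thesis using qj kf by (simp add: hh_def)
      next
        case False
        then have "3*k < q+1" by simp
        from nxt3[OF this, of 0] show ?thesis using kf by simp
      qed
      show ?thesis
      proof (rule eqd[of 1 1])
        show "nxt k (q * aa k + r) = q * aa k + r + 1" by (rule n1)
        show "nxt k (q * aa k + r + 1) = q * aa k + r + 1 + 1" unfolding e1 by (rule n2)
      qed simp_all
    qed
  qed
qed

lemma blockB3:
  assumes "0 < k" "r < aa k" "3*k < q"
  shows "\<exists>d d2. nxt k (q * aa k + r) = q * aa k + r + d \<and> nxt k (q * aa k + r + d) = q * aa k + r + d + d2
    \<and> d mod 3 = d2 mod 3 \<and> d mod 3 \<noteq> 0"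
proof (intro exI[of _ 1] conjI)
  show "nxt k (q * aa k + r) = q * aa k + r + 1" using nxt3[OF assms(3,2)] .
  show "nxt k (q * aa k + r + 1) = q * aa k + r + 1 + 1"
  proof (cases "r + 1 < aa k")
    case True then show ?thesis using nxt3[OF assms(3) True] by (simp add: add.assoc)
  next
    case False
    then have e1: "q * aa k + r + 1 = (q+1) * aa k + 0" using assms(2) by simp
    have "3*k < q+1" using assms by simp
    have "0 < aa k" by (rule aa_pos)
    from nxt3[OF \<open>3*k < q+1\<close> this] show ?thesis unfolding e1 .
  qed
qed simp_all

lemma blockB:
  assumes "0 < k" "r < aa k" "condM k q r" "Tc k q r mod 3 = 1"
  shows "\<exists>d d2. nxt k (q * aa k + r) = q * aa k + r + d \<and> nxt k (q * aa k + r + d) = q * aa k + r + d + d2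
    \<and> d mod 3 = d2 mod 3 \<and> d mod 3 \<noteq> 0"
proof -
  consider "q \<le> tt k" | "tt k < q" "q \<le> 3*k" | "3*k < q" by linarith
  then show ?thesis
    by cases (use blockB1[OF assms] blockB2[OF assms] blockB3[OF assms(1,2)] in auto)
qed



lemma zero_H: "0 \<in> Hset k" by (simp add: Hset_def)
lemma ray_H: "{(2 * tt k + eps k + 1) * aa k..} \<subseteq> Hset k" by (auto simp: Hset_def)
lemma inf_H: "infinite (Hset k)" using ray_H infinite_Ici finite_subset by blast

lemma enum0: "enumerate (Hset k) 0 = 0"
  unfolding enumerate_0 using zero_H[of k] by (intro Least_equality) auto

lemma enum_Suc:
  assumes "0 < k"
  shows "enumerate (Hset k) (Suc n) = nxt k (enumerate (Hset k) n)"
proof -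
  define y where "y = enumerate (Hset k) n"
  have yH: "y \<in> Hset k" using enumerate_in_set[OF inf_H] y_def by simp
  note st = stepH[OF assms yH]
  have "(LEAST s. s \<in> Hset k \<and> y < s) = nxt k y"
  proof (rule Least_equality)
    show "nxt k y \<in> Hset k \<and> y < nxt k y" using st by simp
    show "nxt k y \<le> s" if "s \<in> Hset k \<and> y < s" for s
      using st that by (meson not_le)
  qed
  then show ?thesis using enumerate_Suc''[OF inf_H] y_def by simp
qed

lemma TT_enum:
  assumes "0 < k"
  shows "TT k (enumerate (Hset k) n) = int n"
proof (induction n)
  case 0
  show ?case by (simp add: enum0 TT_def Tc_def)
next
  case (Suc n)
  have "enumerate (Hset k) n \<in> Hset k" using enumerate_in_set[OF inf_H] by simp
  then show ?case using enum_Suc[OF assms] stepH[OF assms] Suc.IH by simp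
qed

lemma block:
  assumes "0 < k"
  shows "\<exists>d d2. enumerate (Hset k) (m*3 + 2) = enumerate (Hset k) (m*3 + 1) + d
      \<and> enumerate (Hset k) (m*3 + 3) = enumerate (Hset k) (m*3 + 1) + d + d2
      \<and> d mod 3 = d2 mod 3 \<and> d mod 3 \<noteq> 0"
proof -
  define y where "y = enumerate (Hset k) (m*3 + 1)"
  define q r where "q = y div aa k" "r = y mod aa k"
  have yq: "y = q * aa k + r" by (simp add: q_r_def)
  have ra: "r < aa k" by (simp add: q_r_def aa_pos)
  have yH: "y \<in> Hset k" using enumerate_in_set[OF inf_H] y_def by simp
  have c: "condM k q r" using yH Hset_char q_r_def by simp
  have "Tc k q r = int (m*3 + 1)" using TT_enum[OF assms, of "m*3+1"] y_def q_r_def by (simp add: TT_def)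
  then have T: "Tc k q r mod 3 = 1" by presburger
  obtain d d2 where dd: "nxt k y = y + d" "nxt k (y + d) = y + d + d2" "d mod 3 = d2 mod 3" "d mod 3 \<noteq> 0"
    using blockB[OF assms ra c T] unfolding yq[symmetric] by blast
  have e2: "enumerate (Hset k) (m*3 + 2) = nxt k y"
    using enum_Suc[OF assms, of "m*3+1"] y_def by simp
  have e3: "enumerate (Hset k) (m*3 + 3) = nxt k (nxt k y)"
  proof -
    have "m*3+3 = Suc (m*3+2)" by simp
    then show ?thesis using enum_Suc[OF assms, of "m*3+2"] e2 by metis
  qed
  show ?thesis using dd e2 e3 y_def by (intro exI[of _ d] exI[of _ d2]) simp
qed

lemma bij3:
  fixes f :: "nat \<Rightarrow> nat"
  assumes "f 2 = f 1 + d" "f 3 = f 1 + d + d2" "d mod 3 = d2 mod 3" "d mod 3 \<noteq> 0"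
  shows "bij_betw (\<lambda>j. f j mod 3) {1..3} {0..<3}"
proof -
  have s: "{1..3::nat} = {1,2,3}" by auto
  have d1: "f 1 mod 3 \<noteq> f 2 mod 3" "f 1 mod 3 \<noteq> f 3 mod 3" "f 2 mod 3 \<noteq> f 3 mod 3"
    using assms by presburger+
  have inj: "inj_on (\<lambda>j. f j mod 3) {1,2,3}" using d1 by (auto simp: inj_on_def)
  have img: "(\<lambda>j. f j mod 3) ` {1,2,3} = {0..<3}"
  proof -
    have "(\<lambda>j. f j mod 3) ` {1,2,3} \<subseteq> {0..<3}" by auto
    moreover have "card ((\<lambda>j. f j mod 3) ` {1,2,3}) = 3" using card_image[OF inj] by simp
    ultimately show ?thesis by (simp add: card_subset_eq)
  qed
  show ?thesis unfolding s bij_betw_def using inj img by simp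
qed

lemma perm_part:
  assumes "0 < k"
  shows "perm_numerical_semigroup 3 (Hset k)"
proof -
  have sub: "submonoid (Hset k)"
  proof -
    have "submonoid (gen {aa k, aa k + 2, aa k + 4})"
      unfolding submonoid_def by (auto intro: gen.intros)
    then show ?thesis using gen_eq_H by simp
  qed
  have fin: "finite (UNIV - Hset k)"
  proof -
    have "UNIV - Hset k \<subseteq> {..<(2 * tt k + eps k + 1) * aa k}"
    proof
      fix x assume "x \<in> UNIV - Hset k"
      then show "x \<in> {..<(2 * tt k + eps k + 1) * aa k}" using ray_H[of k] by (auto simp: not_less)
    qed
    then show ?thesis using finite_subset by blast
  qed
  have n0: "nxt k 0 = aa k" by (simp add: nxt_def)
  have t1: "1 \<le> tt k" using kfacts[OF assms] by simp
  have n1: "nxt k (aa k) = aa k + 2"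
    using nxt1[of 1 k 0] t1 aa_pos[of k] by simp
  have n2: "nxt k (aa k + 2) = aa k + 4"
  proof -
    have "2 < aa k" using assms by (simp add: aa_def)
    then show ?thesis using nxt1[of 1 k 2] t1 by simp
  qed
  have g1: "enumerate (Hset k) 1 = aa k" using enum_Suc[OF assms, of 0] enum0 n0 by simp
  have g2: "enumerate (Hset k) 2 = aa k + 2" using enum_Suc[OF assms, of 1] g1 n1 by (simp add: numeral_2_eq_2)
  have g3: "enumerate (Hset k) 3 = aa k + 4" using enum_Suc[OF assms, of 2] g2 n2 by (simp add: numeral_3_eq_3)
  have img: "enumerate (Hset k) ` {1..3} = {aa k, aa k + 2, aa k + 4}"
  proof -
    have "{1..3::nat} = {1,2,3}" by auto
    then show ?thesis using g1 g2 g3 by simp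
  qed
  have bl: "bij_betw (\<lambda>j. enumerate (Hset k) (m * 3 + j) mod 3) {1..3} {0..<3}" for m
  proof -
    obtain d d2 where dd: "enumerate (Hset k) (m*3 + 2) = enumerate (Hset k) (m*3 + 1) + d"
      "enumerate (Hset k) (m*3 + 3) = enumerate (Hset k) (m*3 + 1) + d + d2"
      "d mod 3 = d2 mod 3" "d mod 3 \<noteq> 0" using block[OF assms, of m] by blast
    show ?thesis by (rule bij3[of "\<lambda>j. enumerate (Hset k) (m * 3 + j)" d d2]) (use dd in simp_all)
  qed
  show ?thesis unfolding perm_numerical_semigroup_def numerical_semigroup_def
    using sub fin img gen_eq_H bl by simp
qed


theorem lemma4p4:
  fixes k :: nat
  assumes "0 < k"
  shows "(submonoid (Hset k) \<and> {aa k, aa k + 2, aa k + 4} \<subseteq> Hset k)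
    \<and> ((\<forall>i. 1 \<le> i \<and> i \<le> tt k - 1 \<longrightarrow> Aset k i <\<^sub>s Aset k (i + 1))
       \<and> (even k \<longrightarrow> Aset k (tt k) <\<^sub>s Bset k (tt k + 1) \<and> Bset k (tt k + 1) <\<^sub>s Cset k (tt k + 1))
       \<and> (odd k \<longrightarrow> Bset k (tt k + 1) = {} \<and> Aset k (tt k) <\<^sub>s Cset k (tt k + 1))
       \<and> (\<forall>i. tt k + 2 \<le> i \<and> i \<le> 2 * tt k + eps k \<longrightarrow> Bset k i <\<^sub>s Cset k i)
       \<and> (\<forall>i. tt k + 1 \<le> i \<and> i \<le> 2 * tt k + eps k - 1 \<longrightarrow> Cset k i <\<^sub>s Bset k (i + 1))
       \<and> Cset k (2 * tt k + eps k) <\<^sub>s {(2 * tt k + eps k + 1) * aa k..})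
    \<and> gen {aa k, aa k + 2, aa k + 4} = Hset k
    \<and> perm_numerical_semigroup 3 (Hset k)"
proof -
  have g: "gen {aa k, aa k + 2, aa k + 4} = Hset k" by (rule gen_eq_H)
  have p: "perm_numerical_semigroup 3 (Hset k)" by (rule perm_part[OF assms])
  then have sub: "submonoid (Hset k)" by (simp add: perm_numerical_semigroup_def numerical_semigroup_def)
  have s: "{aa k, aa k + 2, aa k + 4} \<subseteq> Hset k" using g by (auto intro: gen.gen_base)
  show ?thesis using sub s part2[OF assms] g p by blast
qed

end
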